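(* Let $Q$ be a Dynkin quiver equipped with a group $G$ of automorphisms, and let $\gamma,\beta\in\Phi(Q)$ be roots such that $\pi(\gamma)=\pi(\beta)$. Then there exists $g\in G$ such that $\gamma=g\cdot\beta$.
   Context: A Dynkin quiver is a finite quiver whose underlying graph is a Dynkin diagram of type $\mathbb A_n,\mathbb D_n,\mathbb E_6,\mathbb E_7,\mathbb E_8$, with vertex set $Q_0$. $\Phi(Q)\subset\mathbb Z^{Q_0}$ is its root system, roots written in the basis of simple roots $\alpha_i$, $i\in Q_0$. An automorphism of $Q$ is a permutation $g$ of $Q_0$ preserving $b_{ij}$ = #arrows $i\to j$ $-$ #arrows $j\to i$. $G$ acts on $\mathbb Z^{Q_0}$ by $g\cdot(d_i)_{i}=(d_{g^{-1}i})_i$. With $\overline Q_0$ the set of $G$-orbits, $\pi:\mathbb Z^{Q_0}\to\mathbb Z^{\overline Q_0}$ is $(d_i)_i\mapsto(\sum_{j\in\mathbf i}d_j)_{\mathbf i\in\overline Q_0}$. *)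

theory Defs
  imports Main
begin

text \<open>A quiver on the finite vertex type 'v is given by its arrow counts:
  a i j = number of arrows i -> j.\<close>

definition bmat :: "('v \<Rightarrow> 'v \<Rightarrow> nat) \<Rightarrow> 'v \<Rightarrow> 'v \<Rightarrow> int" where
  "bmat a i j = int (a i j) - int (a j i)"

text \<open>Standard Dynkin diagrams on vertex set {0..<n} (simply laced, as undirected graphs).\<close>

definition path_edge :: "nat \<Rightarrow> nat \<Rightarrow> bool" where
  "path_edge i j \<longleftrightarrow> i = Suc j \<or> j = Suc i"

definition typeA :: "nat \<Rightarrow> nat \<Rightarrow> nat \<Rightarrow> bool" where
  "typeA n i j \<longleftrightarrow> i < n \<and> j < n \<and> path_edge i j"

definition branched :: "nat \<Rightarrow> nat \<Rightarrow> nat \<Rightarrow> nat \<Rightarrow> bool" where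
  "branched n k i j \<longleftrightarrow>
     (i < n - 1 \<and> j < n - 1 \<and> path_edge i j) \<or>
     (i = n - 1 \<and> j = k) \<or> (i = k \<and> j = n - 1)"

definition dynkin_graph :: "nat \<Rightarrow> (nat \<Rightarrow> nat \<Rightarrow> bool) \<Rightarrow> bool" where
  "dynkin_graph n E \<longleftrightarrow>
     (n \<ge> 1 \<and> E = typeA n) \<or>
     (n \<ge> 4 \<and> E = branched n (n - 3)) \<or>
     (n \<in> {6, 7, 8} \<and> E = branched n 2)"

text \<open>A Dynkin quiver: its underlying graph (edge multiplicity between i and j is
  a i j + a j i) is isomorphic to a Dynkin diagram of type A_n, D_n, E_6, E_7, E_8.\<close>
definition dynkin_quiver :: "('v::finite \<Rightarrow> 'v \<Rightarrow> nat) \<Rightarrow> bool" where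
  "dynkin_quiver a \<longleftrightarrow> (\<exists>n E f. dynkin_graph n E \<and> bij_betw f UNIV {0..<n} \<and>
      (\<forall>i j. a i j + a j i = (if E (f i) (f j) then 1 else 0)))"

definition cartan :: "('v \<Rightarrow> 'v \<Rightarrow> nat) \<Rightarrow> 'v \<Rightarrow> 'v \<Rightarrow> int" where
  "cartan a i j = (if i = j then 2 else 0) - int (a i j + a j i)"

definition simple_root :: "'v \<Rightarrow> 'v \<Rightarrow> int" where
  "simple_root i = (\<lambda>j. if j = i then 1 else 0)"

definition reflection :: "('v::finite \<Rightarrow> 'v \<Rightarrow> nat) \<Rightarrow> 'v \<Rightarrow> ('v \<Rightarrow> int) \<Rightarrow> ('v \<Rightarrow> int)" where
  "reflection a i d = (\<lambda>j. d j - (\<Sum>k\<in>UNIV. cartan a k i * d k) * simple_root i j)"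

inductive_set roots :: "('v::finite \<Rightarrow> 'v \<Rightarrow> nat) \<Rightarrow> ('v \<Rightarrow> int) set" for a where
  simple: "simple_root i \<in> roots a"
| refl: "d \<in> roots a \<Longrightarrow> reflection a i d \<in> roots a"

definition quiver_aut :: "('v \<Rightarrow> 'v \<Rightarrow> nat) \<Rightarrow> ('v \<Rightarrow> 'v) \<Rightarrow> bool" where
  "quiver_aut a g \<longleftrightarrow> bij g \<and> (\<forall>i j. bmat a (g i) (g j) = bmat a i j)"

definition aut_group :: "('v \<Rightarrow> 'v \<Rightarrow> nat) \<Rightarrow> ('v \<Rightarrow> 'v) set \<Rightarrow> bool" where
  "aut_group a G \<longleftrightarrow> (\<forall>g\<in>G. quiver_aut a g) \<and> id \<in> G \<and>
     (\<forall>g\<in>G. \<forall>h\<in>G. g \<circ> h \<in> G) \<and> (\<forall>g\<in>G. inv g \<in> G)"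

definition act :: "('v \<Rightarrow> 'v) \<Rightarrow> ('v \<Rightarrow> int) \<Rightarrow> ('v \<Rightarrow> int)" where
  "act g d = (\<lambda>i. d (inv g i))"

definition orbit :: "('v \<Rightarrow> 'v) set \<Rightarrow> 'v \<Rightarrow> 'v set" where
  "orbit G i = (\<lambda>g. g i) ` G"

text \<open>pi(d): the component at an orbit X is the sum of d over X.\<close>
definition orbit_proj :: "('v \<Rightarrow> int) \<Rightarrow> 'v set \<Rightarrow> int" where
  "orbit_proj d X = (\<Sum>j\<in>X. d j)"

end

theory Submission
  imports Defs
begin


definition QE :: "nat \<Rightarrow> (nat\<Rightarrow>nat\<Rightarrow>bool) \<Rightarrow> (nat\<Rightarrow>int) \<Rightarrow> int" where
 "QE n E x = 2 * (\<Sum>m<n. x m * x m) - (\<Sum>m<n. \<Sum>m'<n. if E m m' then x m * x m' else 0)"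

definition PS :: "nat \<Rightarrow> (nat\<Rightarrow>int) \<Rightarrow> int" where
 "PS n x = (\<Sum>m<n. \<Sum>m'<n. if path_edge m m' then x m * x m' else 0)"

lemma PS_0: "PS 0 x = 0" by (simp add: PS_def)

lemma sum_pe: fixes x :: "nat \<Rightarrow> int" shows "(\<Sum>m<n. if path_edge m n then x m * x n else 0) = (if n = 0 then 0 else x (n-1) * x n)"
proof (cases n)
  case 0 then show ?thesis by simp
next
  case (Suc k)
  have "(\<Sum>m<n. if path_edge m n then x m * x n else 0) = (\<Sum>m<n. if m = k then x m * x n else 0)"
    by (rule sum.cong) (auto simp: path_edge_def Suc)
  also have "\<dots> = x k * x n" using Suc by simp
  finally show ?thesis using Suc by simp
qed

lemma sum_pe2: fixes x :: "nat \<Rightarrow> int" shows "(\<Sum>m<n. if path_edge n m then x n * x m else 0) = (if n = 0 then 0 else x (n-1) * x n)"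
proof -
  have "(\<Sum>m<n. if path_edge n m then x n * x m else 0) = (\<Sum>m<n. if path_edge m n then x m * x n else 0)"
    by (rule sum.cong) (auto simp: path_edge_def mult.commute)
  then show ?thesis using sum_pe[of n x] by (cases n) (simp_all add: mult.commute)
qed

lemma PS_Suc: "PS (Suc n) x = PS n x + (if n = 0 then 0 else 2 * x (n-1) * x n)"
proof -
  have "PS (Suc n) x = (\<Sum>m<n. (\<Sum>m'<n. if path_edge m m' then x m * x m' else 0)
        + (if path_edge m n then x m * x n else 0))
      + ((\<Sum>m'<n. if path_edge n m' then x n * x m' else 0) + (if path_edge n n then x n * x n else 0))"
    by (simp add: PS_def)
  also have "\<dots> = PS n x + (\<Sum>m<n. if path_edge m n then x m * x n else 0)
      + (\<Sum>m'<n. if path_edge n m' then x n * x m' else 0)"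
    by (simp add: PS_def sum.distrib path_edge_def)
  finally show ?thesis by (simp add: sum_pe sum_pe2)
qed

definition R :: "nat \<Rightarrow> (nat\<Rightarrow>int) \<Rightarrow> int" where
 "R k x = x 0 * x 0 + (\<Sum>m<k. (x m - x (Suc m))^2)"

lemma QA_eq: "2*(\<Sum>m<Suc k. x m * x m) - PS (Suc k) x = R k x + x k * x k"
proof (induction k)
  case 0 then show ?case by (simp add: PS_Suc PS_0 R_def)
next
  case (Suc k)
  have "2*(\<Sum>m<Suc (Suc k). x m * x m) - PS (Suc (Suc k)) x
     = (2*(\<Sum>m<Suc k. x m * x m) - PS (Suc k) x) + 2 * x (Suc k) * x (Suc k) - 2 * x k * x (Suc k)"
    by (simp add: PS_Suc algebra_simps)
  also have "\<dots> = R k x + x k * x k + 2 * x (Suc k) * x (Suc k) - 2 * x k * x (Suc k)"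
    using Suc by simp
  also have "\<dots> = R (Suc k) x + x (Suc k) * x (Suc k)"
    by (simp add: R_def power2_eq_square algebra_simps)
  finally show ?case .
qed

lemma R_nonneg: "R k x \<ge> 0"
  unfolding R_def by (intro add_nonneg_nonneg sum_nonneg) auto

lemma R_zero: "R k x = 0 \<Longrightarrow> m \<le> k \<Longrightarrow> x m = 0"
proof (induction k arbitrary: m)
  case 0 then show ?case by (simp add: R_def)
next
  case (Suc k)
  have e: "R (Suc k) x = R k x + (x k - x (Suc k))^2" by (simp add: R_def)
  have "R k x \<ge> 0" by (rule R_nonneg)
  moreover have "(x k - x (Suc k))^2 \<ge> 0" by simp
  ultimately have h1: "R k x = 0" and h2: "(x k - x (Suc k))^2 = 0" using Suc.prems e by linarith+
  have "x k = 0" using Suc.IH[OF h1] by simp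
  with h2 have "x (Suc k) = 0" by simp
  then show ?case using Suc.IH[OF h1] Suc.prems by (cases "m = Suc k") auto
qed

lemma QE_A: "QE (Suc k) (typeA (Suc k)) x = R k x + x k * x k"
proof -
  have "QE (Suc k) (typeA (Suc k)) x = 2*(\<Sum>m<Suc k. x m * x m) - PS (Suc k) x"
    unfolding QE_def PS_def typeA_def by (intro arg_cong2[where f="(-)"] refl sum.cong) auto
  then show ?thesis using QA_eq by simp
qed

lemma QE_B: assumes "k < p"
  shows "QE (Suc p) (branched (Suc p) k) x = 2*(\<Sum>m<Suc p. x m * x m) - PS p x - 2 * x k * x p"
proof -
  have A: "(\<Sum>m<p. \<Sum>m'<p. if branched (Suc p) k m m' then x m * x m' else 0) = PS p x"
    unfolding PS_def branched_def by (intro sum.cong refl) auto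
  have B: "(\<Sum>m<p. if branched (Suc p) k m p then x m * x p else 0) = x k * x p"
  proof -
    have "(\<Sum>m<p. if branched (Suc p) k m p then x m * x p else 0) = (\<Sum>m<p. if m = k then x m * x p else 0)"
      by (rule sum.cong) (auto simp: branched_def)
    then show ?thesis using assms by simp
  qed
  have C: "(\<Sum>m<p. if branched (Suc p) k p m then x p * x m else 0) = x k * x p"
  proof -
    have "(\<Sum>m<p. if branched (Suc p) k p m then x p * x m else 0) = (\<Sum>m<p. if m = k then x k * x p else 0)"
      by (rule sum.cong) (auto simp: branched_def)
    then show ?thesis using assms by simp
  qed
  have D: "\<not> branched (Suc p) k p p" using assms by (auto simp: branched_def path_edge_def)
  show ?thesis
    unfolding QE_def using A B C D by (simp add: sum.distrib)
qed


lemma QE_D: "QE (Suc (Suc (Suc (Suc m)))) (branched (Suc (Suc (Suc (Suc m)))) (Suc m)) x =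
   R (Suc m) x + (x (Suc (Suc m)) + x (Suc (Suc (Suc m))) - x (Suc m))^2 + (x (Suc (Suc m)) - x (Suc (Suc (Suc m))))^2"
proof -
  have "QE (Suc (Suc (Suc (Suc m)))) (branched (Suc (Suc (Suc (Suc m)))) (Suc m)) x =
     2*(\<Sum>m<Suc (Suc (Suc (Suc m))). x m * x m) - PS (Suc (Suc (Suc m))) x - 2 * x (Suc m) * x (Suc (Suc (Suc m)))"
    by (rule QE_B) simp
  also have "\<dots> = (2*(\<Sum>m<Suc (Suc m). x m * x m) - PS (Suc (Suc m)) x) + 2 * x (Suc (Suc m)) * x (Suc (Suc m))
      + 2 * x (Suc (Suc (Suc m))) * x (Suc (Suc (Suc m))) - 2 * x (Suc m) * x (Suc (Suc m)) - 2 * x (Suc m) * x (Suc (Suc (Suc m)))"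
    by (simp add: PS_Suc algebra_simps)
  also have "\<dots> = R (Suc m) x + x (Suc m) * x (Suc m) + 2 * x (Suc (Suc m)) * x (Suc (Suc m))
      + 2 * x (Suc (Suc (Suc m))) * x (Suc (Suc (Suc m))) - 2 * x (Suc m) * x (Suc (Suc m)) - 2 * x (Suc m) * x (Suc (Suc (Suc m)))"
    by (simp only: QA_eq)
  also have "\<dots> = R (Suc m) x + (x (Suc (Suc m)) + x (Suc (Suc (Suc m))) - x (Suc m))^2 + (x (Suc (Suc m)) - x (Suc (Suc (Suc m))))^2"
    by (simp add: power2_eq_square algebra_simps)
  finally show ?thesis .
qed

lemma QE_E6: "6 * QE 6 (branched 6 2) x = 3 * (2 * x 0 - x 1)^2 + (3 * x 1 - 2 * x 2)^2 + 3 * (2 * x 5 - x 2)^2 + 3 * (2 * x 4 - x 3)^2 + (3 * x 3 - 2 * x 2)^2 + (x 2)^2"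
proof -
  have "QE 6 (branched 6 2) x = 2*(\<Sum>m<6. x m * x m) - PS 5 x - 2 * x 2 * x 5"
    using QE_B[of 2 5 x] by simp
  then show ?thesis by (simp add: numeral_eq_Suc PS_Suc PS_0 power2_eq_square algebra_simps)
qed

lemma QE_E6_pos: assumes "m < 6" "x m \<noteq> 0" shows "QE 6 (branched 6 2) x > 0"
proof (rule ccontr)
  assume "\<not> ?thesis"
  then have "6 * QE 6 (branched 6 2) x \<le> 0" by simp
  then have le: "3 * (2 * x 0 - x 1)^2 + (3 * x 1 - 2 * x 2)^2 + 3 * (2 * x 5 - x 2)^2 + 3 * (2 * x 4 - x 3)^2 + (3 * x 3 - 2 * x 2)^2 + (x 2)^2 \<le> 0"
    by (simp only: QE_E6)
  have z: "(2 * x 0 - x 1)^2 = 0" "(3 * x 1 - 2 * x 2)^2 = 0" "(2 * x 5 - x 2)^2 = 0" "(2 * x 4 - x 3)^2 = 0" "(3 * x 3 - 2 * x 2)^2 = 0" "(x 2)^2 = 0"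
    using le by (smt (verit) zero_le_power2)+
  then have "x 0 = 0" "x 1 = 0" "x 2 = 0" "x 3 = 0" "x 4 = 0" "x 5 = 0" by auto
  moreover have "m = 0 \<or> m = 1 \<or> m = 2 \<or> m = 3 \<or> m = 4 \<or> m = 5" using assms by arith
  ultimately show False using assms by auto
qed

lemma QE_E7: "12 * QE 7 (branched 7 2) x = 6 * (2 * x 0 - x 1)^2 + 2 * (3 * x 1 - 2 * x 2)^2 + 6 * (2 * x 6 - x 2)^2 + 6 * (2 * x 5 - x 4)^2 + 2 * (3 * x 4 - 2 * x 3)^2 + (4 * x 3 - 3 * x 2)^2 + (x 2)^2"
proof -
  have "QE 7 (branched 7 2) x = 2*(\<Sum>m<7. x m * x m) - PS 6 x - 2 * x 2 * x 6"
    using QE_B[of 2 6 x] by simp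
  then show ?thesis by (simp add: numeral_eq_Suc PS_Suc PS_0 power2_eq_square algebra_simps)
qed

lemma QE_E7_pos: assumes "m < 7" "x m \<noteq> 0" shows "QE 7 (branched 7 2) x > 0"
proof (rule ccontr)
  assume "\<not> ?thesis"
  then have "12 * QE 7 (branched 7 2) x \<le> 0" by simp
  then have le: "6 * (2 * x 0 - x 1)^2 + 2 * (3 * x 1 - 2 * x 2)^2 + 6 * (2 * x 6 - x 2)^2 + 6 * (2 * x 5 - x 4)^2 + 2 * (3 * x 4 - 2 * x 3)^2 + (4 * x 3 - 3 * x 2)^2 + (x 2)^2 \<le> 0"
    by (simp only: QE_E7)
  have z: "(2 * x 0 - x 1)^2 = 0" "(3 * x 1 - 2 * x 2)^2 = 0" "(2 * x 6 - x 2)^2 = 0" "(2 * x 5 - x 4)^2 = 0" "(3 * x 4 - 2 * x 3)^2 = 0" "(4 * x 3 - 3 * x 2)^2 = 0" "(x 2)^2 = 0"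
    using le by (smt (verit) zero_le_power2)+
  then have "x 0 = 0" "x 1 = 0" "x 2 = 0" "x 3 = 0" "x 4 = 0" "x 5 = 0" "x 6 = 0" by auto
  moreover have "m = 0 \<or> m = 1 \<or> m = 2 \<or> m = 3 \<or> m = 4 \<or> m = 5 \<or> m = 6" using assms by arith
  ultimately show False using assms by auto
qed

lemma QE_E8: "60 * QE 8 (branched 8 2) x = 30 * (2 * x 0 - x 1)^2 + 10 * (3 * x 1 - 2 * x 2)^2 + 30 * (2 * x 7 - x 2)^2 + 30 * (2 * x 6 - x 5)^2 + 10 * (3 * x 5 - 2 * x 4)^2 + 5 * (4 * x 4 - 3 * x 3)^2 + 3 * (5 * x 3 - 4 * x 2)^2 + 2 * (x 2)^2"
proof -
  have "QE 8 (branched 8 2) x = 2*(\<Sum>m<8. x m * x m) - PS 7 x - 2 * x 2 * x 7"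
    using QE_B[of 2 7 x] by simp
  then show ?thesis by (simp add: numeral_eq_Suc PS_Suc PS_0 power2_eq_square algebra_simps)
qed

lemma QE_E8_pos: assumes "m < 8" "x m \<noteq> 0" shows "QE 8 (branched 8 2) x > 0"
proof (rule ccontr)
  assume "\<not> ?thesis"
  then have "60 * QE 8 (branched 8 2) x \<le> 0" by simp
  then have le: "30 * (2 * x 0 - x 1)^2 + 10 * (3 * x 1 - 2 * x 2)^2 + 30 * (2 * x 7 - x 2)^2 + 30 * (2 * x 6 - x 5)^2 + 10 * (3 * x 5 - 2 * x 4)^2 + 5 * (4 * x 4 - 3 * x 3)^2 + 3 * (5 * x 3 - 4 * x 2)^2 + 2 * (x 2)^2 \<le> 0"
    by (simp only: QE_E8)
  have z: "(2 * x 0 - x 1)^2 = 0" "(3 * x 1 - 2 * x 2)^2 = 0" "(2 * x 7 - x 2)^2 = 0" "(2 * x 6 - x 5)^2 = 0" "(3 * x 5 - 2 * x 4)^2 = 0" "(4 * x 4 - 3 * x 3)^2 = 0" "(5 * x 3 - 4 * x 2)^2 = 0" "(x 2)^2 = 0"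
    using le by (smt (verit) zero_le_power2)+
  then have "x 0 = 0" "x 1 = 0" "x 2 = 0" "x 3 = 0" "x 4 = 0" "x 5 = 0" "x 6 = 0" "x 7 = 0" by auto
  moreover have "m = 0 \<or> m = 1 \<or> m = 2 \<or> m = 3 \<or> m = 4 \<or> m = 5 \<or> m = 6 \<or> m = 7" using assms by arith
  ultimately show False using assms by auto
qed

lemma QE_pos: assumes "dynkin_graph n E" "m < n" "x m \<noteq> 0" shows "QE n E x > 0"
  using assms(1) unfolding dynkin_graph_def
proof (elim disjE conjE)
  assume "1 \<le> n" "E = typeA n"
  then obtain k where n: "n = Suc k" by (cases n) auto
  have "QE n E x = R k x + x k * x k" using QE_A \<open>E = typeA n\<close> n by simp
  show ?thesis
  proof (rule ccontr)
    assume "\<not> ?thesis"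
    then have "R k x + x k * x k \<le> 0" using \<open>QE n E x = _\<close> by simp
    moreover have "x k * x k \<ge> 0" by simp
    ultimately have "R k x = 0" using R_nonneg[of k x] by linarith
    then show False using R_zero[of k x m] assms n by simp
  qed
next
  assume "4 \<le> n" "E = branched n (n - 3)"
  then obtain k where n: "n = Suc (Suc (Suc (Suc k)))" by (metis add.commute add_Suc_right le_Suc_ex numeral_eq_Suc add_0 pred_numeral_simps semiring_norm(26) semiring_norm(27) semiring_norm(28))
  have e: "QE n E x = R (Suc k) x + (x (Suc (Suc k)) + x (Suc (Suc (Suc k))) - x (Suc k))^2 + (x (Suc (Suc k)) - x (Suc (Suc (Suc k))))^2"
    using QE_D \<open>E = _\<close> n by simp
  show ?thesis
  proof (rule ccontr)
    assume "\<not> ?thesis"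
    then have le: "R (Suc k) x + (x (Suc (Suc k)) + x (Suc (Suc (Suc k))) - x (Suc k))^2 + (x (Suc (Suc k)) - x (Suc (Suc (Suc k))))^2 \<le> 0"
      using e by simp
    have "R (Suc k) x = 0" "(x (Suc (Suc k)) + x (Suc (Suc (Suc k))) - x (Suc k))^2 = 0" "(x (Suc (Suc k)) - x (Suc (Suc (Suc k))))^2 = 0"
      using le R_nonneg[of "Suc k" x] by (smt (verit) zero_le_power2)+
    then have a1: "\<forall>i\<le>Suc k. x i = 0" and a2: "x (Suc (Suc k)) + x (Suc (Suc (Suc k))) - x (Suc k) = 0"
       and a3: "x (Suc (Suc k)) - x (Suc (Suc (Suc k))) = 0"
      using R_zero by auto
    from a1 have "x (Suc k) = 0" by simp
    with a2 a3 have "x (Suc (Suc k)) = 0" "x (Suc (Suc (Suc k))) = 0" by linarith+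
    with a1 have "\<forall>i\<le>Suc k. x i = 0" "x (Suc (Suc k)) = 0" "x (Suc (Suc (Suc k))) = 0" by auto
    then have "\<forall>i<n. x i = 0" using n by (auto simp: less_Suc_eq)
    then show False using assms by auto
  qed
next
  assume "n \<in> {6, 7, 8}" "E = branched n 2"
  then show ?thesis using QE_E6_pos QE_E7_pos QE_E8_pos assms by auto
qed



definition Bf :: "('v::finite \<Rightarrow> 'v \<Rightarrow> nat) \<Rightarrow> ('v \<Rightarrow> int) \<Rightarrow> ('v \<Rightarrow> int) \<Rightarrow> int" where
  "Bf a x y = (\<Sum>i\<in>UNIV. \<Sum>j\<in>UNIV. cartan a i j * x i * y j)"

lemma cartan_sym: "cartan a i j = cartan a j i"
  by (auto simp: cartan_def)

lemma Bf_sym: "Bf a x y = Bf a y x"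
  unfolding Bf_def
  by (subst sum.swap) (simp add: cartan_sym mult_ac)

lemma Bf_right: "Bf a x y = (\<Sum>j\<in>UNIV. y j * (\<Sum>i\<in>UNIV. cartan a i j * x i))"
  unfolding Bf_def
  by (subst sum.swap) (simp add: sum_distrib_left mult_ac)

lemma if01_mult: "(if P then 1 else 0) * (t::int) = (if P then t else 0)" "t * (if P then 1 else 0) = (if P then t else 0)"
  by simp_all

lemma Bf_simple_right: "Bf a x (simple_root j) = (\<Sum>i\<in>UNIV. cartan a i j * x i)"
  unfolding Bf_right by (simp add: simple_root_def if01_mult)

lemma Bf_simple_left: "Bf a (simple_root j) x = (\<Sum>i\<in>UNIV. cartan a i j * x i)"
  by (subst Bf_sym) (rule Bf_simple_right)

lemma Bf_simple_simple: "Bf a (simple_root i) (simple_root j) = cartan a i j"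
  unfolding Bf_simple_right by (simp add: simple_root_def if01_mult)

lemma Bf_lin_left: "Bf a (\<lambda>i. u * x i + v * y i) z = u * Bf a x z + v * Bf a y z"
  unfolding Bf_def by (simp add: sum_distrib_left sum.distrib algebra_simps)

lemma Bf_lin_right: "Bf a z (\<lambda>i. u * x i + v * y i) = u * Bf a z x + v * Bf a z y"
  using Bf_lin_left[where a=a and u=u and x=x and v=v and y=y and z=z] by (simp add: Bf_sym)

lemma Bf_neg_left: "Bf a (\<lambda>i. - x i) z = - Bf a x z"
  using Bf_lin_left[where a=a and u="-1" and x=x and v=0 and y=x and z=z] by simp

lemma Bf_neg_right: "Bf a z (\<lambda>i. - x i) = - Bf a z x"
  using Bf_lin_right[where a=a and u="-1" and x=x and v=0 and y=x and z=z] by simp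

lemma Bf_sum_left: "finite A \<Longrightarrow> Bf a (\<lambda>i. \<Sum>g\<in>A. f g i) z = (\<Sum>g\<in>A. Bf a (f g) z)"
  unfolding Bf_def by (simp add: sum_distrib_right sum_distrib_left)
     (subst sum.swap, rule sum.cong, simp, subst sum.swap, simp)

lemma reflection_eq: "reflection a j d = (\<lambda>k. d k - Bf a d (simple_root j) * simple_root j k)"
  unfolding reflection_def Bf_simple_right by (simp add: mult_ac)


lemma Bf_refl: assumes "cartan a j j = 2"
  shows "Bf a (reflection a j x) (reflection a j y) = Bf a x y"
proof -
  let ?e = "simple_root j"
  have rx: "reflection a j x = (\<lambda>k. 1 * x k + (- Bf a x ?e) * ?e k)" by (simp add: reflection_eq)
  have ry: "reflection a j y = (\<lambda>k. 1 * y k + (- Bf a y ?e) * ?e k)" by (simp add: reflection_eq)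
  have ee: "Bf a ?e ?e = 2" using assms by (simp add: Bf_simple_simple)
  show ?thesis unfolding rx ry Bf_lin_left Bf_lin_right ee
    by (simp add: Bf_sym[of a ?e] algebra_simps)
qed

definition nonneg :: "('v \<Rightarrow> int) \<Rightarrow> bool" where "nonneg d \<longleftrightarrow> (\<forall>i. d i \<ge> 0)"

locale dq =
  fixes a :: "'v::finite \<Rightarrow> 'v \<Rightarrow> nat" and G :: "('v \<Rightarrow> 'v) set"
  assumes dq: "dynkin_quiver a" and ag: "aut_group a G"
begin

lemma a_le1: "a i j + a j i \<le> 1"
  using dq unfolding dynkin_quiver_def by (metis (full_types) le_refl zero_le_one)

lemma a_ii: "a i i = 0"
  using a_le1[of i i] by simp

lemma cartan_ii: "cartan a i i = 2"
  by (simp add: cartan_def a_ii)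

lemma Bf_even: "Bf a x x = 2 * ((\<Sum>i\<in>UNIV. x i * x i) - (\<Sum>i\<in>UNIV. \<Sum>j\<in>UNIV. int (a i j) * x i * x j))"
proof -
  have "Bf a x x = (\<Sum>i\<in>UNIV. \<Sum>j\<in>UNIV. (if i = j then 2 * x i * x j else 0) - int (a i j) * x i * x j - int (a j i) * x i * x j)"
    unfolding Bf_def cartan_def by (auto intro!: sum.cong simp: algebra_simps)
  also have "\<dots> = 2 * (\<Sum>i\<in>UNIV. x i * x i) - (\<Sum>i\<in>UNIV. \<Sum>j\<in>UNIV. int (a i j) * x i * x j)
      - (\<Sum>i\<in>UNIV. \<Sum>j\<in>UNIV. int (a j i) * x i * x j)"
    by (simp add: sum_subtractf sum_distrib_left mult.assoc)
  also have "(\<Sum>i\<in>UNIV. \<Sum>j\<in>UNIV. int (a j i) * x i * x j) = (\<Sum>i\<in>UNIV. \<Sum>j\<in>UNIV. int (a i j) * x i * x j)"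
    by (subst sum.swap) (simp add: mult_ac)
  finally show ?thesis by simp
qed

lemma PD: assumes "d \<noteq> (\<lambda>_. 0)" shows "Bf a d d > 0"
proof -
  obtain n E f where g: "dynkin_graph n E" and f: "bij_betw f UNIV {0..<n}"
    and e: "\<forall>i j. a i j + a j i = (if E (f i) (f j) then 1 else 0)"
    using dq unfolding dynkin_quiver_def by blast
  define x where "x m = d (inv_into UNIV f m)" for m
  have xf: "x (f i) = d i" for i
    using f unfolding x_def bij_betw_def by simp
  have "Bf a d d = (\<Sum>i\<in>UNIV. \<Sum>j\<in>UNIV. (if i = j then 2 * d i * d j else 0) - (if E (f i) (f j) then d i * d j else 0))"
    unfolding Bf_def cartan_def
    by (auto intro!: sum.cong simp del: of_nat_add simp add: e algebra_simps)
  also have "\<dots> = 2 * (\<Sum>i\<in>UNIV. d i * d i) - (\<Sum>i\<in>UNIV. \<Sum>j\<in>UNIV. if E (f i) (f j) then d i * d j else 0)"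
    by (simp add: sum_subtractf sum_distrib_left mult.assoc)
  finally have b1: "Bf a d d = 2 * (\<Sum>i\<in>UNIV. d i * d i) - (\<Sum>i\<in>UNIV. \<Sum>j\<in>UNIV. if E (f i) (f j) then d i * d j else 0)" .
  have s1: "(\<Sum>i\<in>UNIV. d i * d i) = (\<Sum>m<n. x m * x m)"
    using sum.reindex_bij_betw[OF f, of "\<lambda>m. x m * x m"] unfolding xf atLeast0LessThan by simp
  have s2: "(\<Sum>j\<in>UNIV. if E (f i) (f j) then d i * d j else 0) = (\<Sum>m'<n. if E (f i) m' then x (f i) * x m' else 0)" for i
    using sum.reindex_bij_betw[OF f, of "\<lambda>m'. if E (f i) m' then x (f i) * x m' else 0"] unfolding xf atLeast0LessThan by simp
  have s3: "(\<Sum>i\<in>UNIV. \<Sum>j\<in>UNIV. if E (f i) (f j) then d i * d j else 0) = (\<Sum>m<n. \<Sum>m'<n. if E m m' then x m * x m' else 0)"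
    using sum.reindex_bij_betw[OF f, of "\<lambda>m. \<Sum>m'<n. if E m m' then x m * x m' else 0"]
    unfolding s2 atLeast0LessThan by simp
  have "Bf a d d = QE n E x" unfolding QE_def b1 s1 s3 ..
  moreover obtain i where "d i \<noteq> 0" using assms by auto
  moreover have "f i < n" using f unfolding bij_betw_def by auto
  ultimately show ?thesis using QE_pos[OF g, of "f i" x] xf by simp
qed


lemma Bf_ge2: assumes "d \<noteq> (\<lambda>_. 0)" shows "Bf a d d \<ge> 2"
proof -
  obtain K where "Bf a d d = 2 * K" using Bf_even[of d] by blast
  then show ?thesis using PD[OF assms] by presburger
qed

lemma root_norm: "d \<in> roots a \<Longrightarrow> Bf a d d = 2"
proof (induction rule: roots.induct)
  case (simple i) then show ?case by (simp add: Bf_simple_simple cartan_ii)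
next
  case (refl d i) then show ?case by (simp add: Bf_refl cartan_ii)
qed

lemma root_nonzero: "d \<in> roots a \<Longrightarrow> d \<noteq> (\<lambda>_. 0)"
  using root_norm[of d] by (auto simp: Bf_def)

lemma root_neg: "d \<in> roots a \<Longrightarrow> (\<lambda>k. - d k) \<in> roots a"
proof (induction rule: roots.induct)
  case (simple i)
  have "reflection a i (simple_root i) = (\<lambda>k. - simple_root i k)"
    by (simp add: reflection_eq Bf_simple_simple cartan_ii)
  then show ?case using roots.simple roots.refl by metis
next
  case (refl d i)
  have "reflection a i (\<lambda>k. - d k) = (\<lambda>k. - reflection a i d k)"
    by (simp add: reflection_eq Bf_neg_left)
  then show ?case using refl roots.refl by metis
qed

lemma root_sign: assumes "d \<in> roots a" shows "nonneg d \<or> nonneg (\<lambda>k. - d k)"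
proof (rule ccontr)
  assume "\<not> ?thesis"
  then obtain i j where i: "d i < 0" and j: "d j > 0" unfolding nonneg_def by (auto simp: not_le)
  define p where "p k = max (d k) 0" for k
  define m where "m k = max (- d k) 0" for k
  have dpm: "d = (\<lambda>k. 1 * p k + (-1) * m k)" by (auto simp: p_def m_def)
  have e: "Bf a d d = Bf a p p - 2 * Bf a p m + Bf a m m"
    by (subst (1 2) dpm, simp only: Bf_lin_left Bf_lin_right, simp add: Bf_sym[of a m p])
  have "Bf a p m \<le> 0"
    unfolding Bf_def
  proof (intro sum_nonpos)
    fix x y
    show "cartan a x y * p x * m y \<le> 0"
    proof (cases "x = y")
      case True then show ?thesis by (simp add: p_def m_def)
    next
      case False
      then have "cartan a x y \<le> 0" by (simp add: cartan_def)
      moreover have "p x * m y \<ge> 0" by (simp add: p_def m_def)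
      ultimately show ?thesis by (metis mult.assoc mult_nonpos_nonneg)
    qed
  qed
  moreover have "p \<noteq> (\<lambda>_. 0)" using j by (metis max.absorb1 less_imp_le p_def less_irrefl)
  moreover have "m \<noteq> (\<lambda>_. 0)" using i by (metis m_def max.absorb1 neg_0_less_iff_less less_imp_le less_irrefl)
  ultimately have "Bf a d d \<ge> 4" using e Bf_ge2[of p] Bf_ge2[of m] by linarith
  then show False using root_norm[OF assms] by simp
qed

end



context dq begin

lemma G_aut: "g \<in> G \<Longrightarrow> quiver_aut a g" using ag by (simp add: aut_group_def)
lemma G_bij: "g \<in> G \<Longrightarrow> bij g" using G_aut by (simp add: quiver_aut_def)
lemma G_id: "id \<in> G" using ag by (simp add: aut_group_def)
lemma G_comp: "g \<in> G \<Longrightarrow> h \<in> G \<Longrightarrow> g \<circ> h \<in> G" using ag by (simp add: aut_group_def)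
lemma G_inv: "g \<in> G \<Longrightarrow> inv g \<in> G" using ag by (simp add: aut_group_def)
lemma G_finite: "finite G" by simp

lemma a_nat_bmat: "a i j = nat (bmat a i j)"
  using a_le1[of i j] by (auto simp: bmat_def)

lemma a_aut: "g \<in> G \<Longrightarrow> a (g i) (g j) = a i j"
  using G_aut by (simp add: a_nat_bmat quiver_aut_def)

lemma cartan_aut: "g \<in> G \<Longrightarrow> cartan a (g i) (g j) = cartan a i j"
  using G_bij[of g] by (auto simp: cartan_def a_aut bij_def inj_eq)

lemma inv_g_g: "g \<in> G \<Longrightarrow> inv g (g i) = i"
  using G_bij by (simp add: bij_def inv_f_f)
lemma g_inv_g: "g \<in> G \<Longrightarrow> g (inv g i) = i"
  using G_bij by (simp add: bij_def surj_f_inv_f)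

lemma act_Bf: assumes "g \<in> G" shows "Bf a (act g x) (act g y) = Bf a x y"
proof -
  have r: "(\<Sum>i\<in>UNIV. F (inv g i)) = (\<Sum>i\<in>UNIV. F i)" for F :: "'v \<Rightarrow> int"
    using sum.reindex_bij_betw[of "inv g" UNIV UNIV F] G_bij[OF G_inv[OF assms]] by simp
  have "Bf a (act g x) (act g y) = (\<Sum>i\<in>UNIV. \<Sum>j\<in>UNIV. cartan a i j * x (inv g i) * y (inv g j))"
    by (simp add: Bf_def act_def)
  also have "\<dots> = (\<Sum>i\<in>UNIV. \<Sum>j\<in>UNIV. cartan a (g (inv g i)) (g (inv g j)) * x (inv g i) * y (inv g j))"
    by (simp add: g_inv_g assms)
  also have "\<dots> = (\<Sum>i\<in>UNIV. \<Sum>j\<in>UNIV. cartan a (inv g i) (inv g j) * x (inv g i) * y (inv g j))"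
    by (simp add: cartan_aut assms)
  also have "\<dots> = Bf a x y"
  proof -
    have r2: "(\<Sum>i\<in>UNIV. \<Sum>j\<in>UNIV. F (inv g i) (inv g j)) = (\<Sum>i\<in>UNIV. \<Sum>j\<in>UNIV. F i j)" for F :: "'v \<Rightarrow> 'v \<Rightarrow> int"
    proof -
      have "(\<Sum>i\<in>UNIV. \<Sum>j\<in>UNIV. F (inv g i) (inv g j)) = (\<Sum>i\<in>UNIV. \<Sum>j\<in>UNIV. F (inv g i) j)"
        using r[of "F (inv g _)"] by simp
      also have "\<dots> = (\<Sum>i\<in>UNIV. \<Sum>j\<in>UNIV. F i j)" by (rule r[of "\<lambda>i. \<Sum>j\<in>UNIV. F i j"])
      finally show ?thesis .
    qed
    show ?thesis unfolding Bf_def by (rule r2)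
  qed
  finally show ?thesis .
qed

lemma act_simple: assumes "g \<in> G" shows "act g (simple_root j) = simple_root (g j)"
proof -
  have "inv g i = j \<longleftrightarrow> i = g j" for i using inv_g_g g_inv_g assms by metis
  then show ?thesis by (auto simp: act_def simple_root_def)
qed

lemma act_neg: "act g (\<lambda>k. - d k) = (\<lambda>k. - act g d k)"
  by (simp add: act_def)

lemma act_Bf_simple: assumes "g \<in> G" shows "Bf a (act g d) (simple_root i) = Bf a d (simple_root (inv g i))"
proof -
  have "simple_root i = act g (simple_root (inv g i))" using assms by (simp add: act_simple g_inv_g)
  then show ?thesis using act_Bf[OF assms] by metis
qed

lemma orbit_self: "i \<in> orbit G i"
  using G_id unfolding orbit_def by (force intro: image_eqI[where x=id])

lemma orbit_mem: "g \<in> G \<Longrightarrow> g i \<in> orbit G i"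
  unfolding orbit_def by auto

lemma orbit_eq: assumes "j \<in> orbit G i" shows "orbit G j = orbit G i"
proof -
  obtain g where g: "g \<in> G" "j = g i" using assms unfolding orbit_def by auto
  show ?thesis
  proof
    show "orbit G j \<subseteq> orbit G i" unfolding orbit_def using g G_comp by (auto intro!: image_eqI[where x="_ \<circ> g"])
    show "orbit G i \<subseteq> orbit G j" unfolding orbit_def using g G_comp G_inv inv_g_g
      by (auto intro!: image_eqI[where x="_ \<circ> inv g"])
  qed
qed

lemma orbit_g: "g \<in> G \<Longrightarrow> orbit G (g i) = orbit G i"
  by (rule orbit_eq[OF orbit_mem])

lemma orbit_inv_mem: "g \<in> G \<Longrightarrow> (inv g i \<in> orbit G j) = (i \<in> orbit G j)"
  by (metis G_inv g_inv_g orbit_eq orbit_g orbit_self)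

lemma orbit_disj: "orbit G i \<noteq> orbit G j \<Longrightarrow> orbit G i \<inter> orbit G j = {}"
  using orbit_eq by blast

end



lemma sum_if_mem: fixes f :: "'v::finite \<Rightarrow> int" shows "(\<Sum>k\<in>UNIV. if k \<in> C then f k else 0) = sum f C"
  by (simp add: sum.If_cases Int_def)

context dq begin

lemma adm: assumes "j \<in> orbit G i" shows "a i j = 0"
proof (rule ccontr)
  assume nz: "a i j \<noteq> 0"
  obtain g where g: "g \<in> G" "j = g i" using assms unfolding orbit_def by auto
  have step: "a ((g^^m) i) (g ((g^^m) i)) \<noteq> 0" for m
  proof (induction m)
    case 0 then show ?case using nz g by simp
  next
    case (Suc m) then show ?case using a_aut[OF g(1)] by simp
  qed
  define C where "C = range (\<lambda>m. (g^^m) i)"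
  have gC: "v \<in> C \<Longrightarrow> g v \<in> C" for v
  proof -
    assume "v \<in> C"
    then obtain m where "v = (g^^m) i" unfolding C_def by auto
    then have "g v = (g^^(Suc m)) i" by simp
    then show "g v \<in> C" unfolding C_def by blast
  qed
  have aC: "v \<in> C \<Longrightarrow> a v (g v) \<ge> 1" for v
    unfolding C_def using step by (auto simp: Suc_le_eq)
  have iC: "i \<in> C" unfolding C_def by (auto intro!: range_eqI[where x=0])
  define c :: "'v \<Rightarrow> int" where "c k = (if k \<in> C then 1 else 0)" for k
  have cnz: "c \<noteq> (\<lambda>_. 0)" using iC by (metis c_def one_neq_zero)
  have s1: "(\<Sum>k\<in>UNIV. c k * c k) = int (card C)"
    unfolding c_def by (simp add: if01_mult sum.If_cases)
  have s2: "(\<Sum>k\<in>UNIV. \<Sum>l\<in>UNIV. int (a k l) * c k * c l) = (\<Sum>k\<in>C. \<Sum>l\<in>C. int (a k l))"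
  proof -
    have "(\<Sum>k\<in>UNIV. \<Sum>l\<in>UNIV. int (a k l) * c k * c l) = (\<Sum>k\<in>UNIV. if k \<in> C then (\<Sum>l\<in>UNIV. if l \<in> C then int (a k l) else 0) else 0)"
      by (auto intro!: sum.cong simp: c_def)
    then show ?thesis unfolding sum_if_mem .
  qed
  have s3: "(\<Sum>k\<in>C. \<Sum>l\<in>C. int (a k l)) \<ge> (\<Sum>k\<in>C. 1)"
  proof (rule sum_mono)
    fix k assume k: "k \<in> C"
    have "int (a k (g k)) \<le> (\<Sum>l\<in>C. int (a k l))"
      by (rule member_le_sum) (auto simp: gC k)
    then show "1 \<le> (\<Sum>l\<in>C. int (a k l))" using aC[OF k] by linarith
  qed
  have "Bf a c c \<le> 0" using Bf_even[of c] s1 s2 s3 by simp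
  then show False using PD[OF cnz] by simp
qed

lemma cartan_orb: assumes "j \<in> orbit G i" "i \<noteq> j" shows "cartan a i j = 0"
proof -
  have "i \<in> orbit G j" using orbit_eq[OF assms(1)] orbit_self by blast
  then show ?thesis using adm assms by (simp add: cartan_def)
qed

end



definition sO :: "('v::finite \<Rightarrow> 'v \<Rightarrow> nat) \<Rightarrow> 'v set \<Rightarrow> ('v \<Rightarrow> int) \<Rightarrow> ('v \<Rightarrow> int)" where
  "sO a Ob d = (\<lambda>k. if k \<in> Ob then d k - Bf a d (simple_root k) else d k)"

context dq begin

lemma cartan_in_orbit: "i \<in> orbit G r \<Longrightarrow> j \<in> orbit G r \<Longrightarrow> i \<noteq> j \<Longrightarrow> cartan a i j = 0"
  by (metis cartan_orb orbit_eq)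

lemma sO_root_gen:
  assumes "finite S" "S \<subseteq> orbit G r" "d \<in> roots a"
  shows "sO a S d \<in> roots a"
  using assms(1,2)
proof (induction S rule: finite_induct)
  case empty
  have "sO a {} d = d" by (simp add: sO_def)
  then show ?case using assms(3) by simp
next
  case (insert j S)
  have jO: "j \<in> orbit G r" and SO: "S \<subseteq> orbit G r" using insert.prems by auto
  have B: "Bf a (sO a S d) (simple_root j) = Bf a d (simple_root j)"
    unfolding Bf_simple_right
  proof (rule sum.cong[OF HOL.refl])
    fix i
    show "cartan a i j * sO a S d i = cartan a i j * d i"
    proof (cases "i \<in> S")
      case True
      then have "i \<noteq> j" using insert.hyps by auto
      then have "cartan a i j = 0" using cartan_in_orbit[of i r j] True SO jO by auto
      then show ?thesis by simp
    next
      case False then show ?thesis by (simp add: sO_def)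
    qed
  qed
  have "sO a (insert j S) d = reflection a j (sO a S d)"
    unfolding reflection_eq B using insert.hyps by (auto simp: sO_def simple_root_def)
  then show ?case using insert.IH SO roots.refl by simp
qed

lemma sO_root: "d \<in> roots a \<Longrightarrow> sO a (orbit G r) d \<in> roots a"
  using sO_root_gen[of "orbit G r" r d] by simp

lemma sO_Bf: assumes "j \<in> orbit G r"
  shows "Bf a (sO a (orbit G r) d) (simple_root j) = - Bf a d (simple_root j)"
proof -
  have "Bf a (sO a (orbit G r) d) (simple_root j) = (\<Sum>i\<in>UNIV. cartan a i j * sO a (orbit G r) d i)"
    by (rule Bf_simple_right)
  also have "\<dots> = (\<Sum>i\<in>UNIV. cartan a i j * d i - (if i = j then 2 * Bf a d (simple_root j) else 0))"
  proof (rule sum.cong[OF HOL.refl])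
    fix i
    show "cartan a i j * sO a (orbit G r) d i = cartan a i j * d i - (if i = j then 2 * Bf a d (simple_root j) else 0)"
    proof (cases "i = j")
      case True then show ?thesis using assms by (simp add: sO_def cartan_ii algebra_simps)
    next
      case False
      show ?thesis
      proof (cases "i \<in> orbit G r")
        case True
        then have "cartan a i j = 0" using cartan_in_orbit assms False by blast
        then show ?thesis using False by simp
      next
        case False then show ?thesis using \<open>i \<noteq> j\<close> by (simp add: sO_def)
      qed
    qed
  qed
  also have "\<dots> = Bf a d (simple_root j) - 2 * Bf a d (simple_root j)"
    by (simp add: sum_subtractf Bf_simple_right)
  finally show ?thesis by simp
qed

lemma sO_invol: "sO a (orbit G r) (sO a (orbit G r) d) = d"
proof (rule ext)
  fix k
  show "sO a (orbit G r) (sO a (orbit G r) d) k = d k"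
  proof (cases "k \<in> orbit G r")
    case True
    have "sO a (orbit G r) (sO a (orbit G r) d) k = sO a (orbit G r) d k - Bf a (sO a (orbit G r) d) (simple_root k)"
      unfolding sO_def[of a "orbit G r" "sO a (orbit G r) d"] using True by simp
    also have "\<dots> = d k" using sO_Bf[OF True, of d] True by (simp add: sO_def)
    finally show ?thesis .
  next
    case False then show ?thesis by (simp add: sO_def)
  qed
qed

lemma act_sO: assumes "g \<in> G" shows "act g (sO a (orbit G r) d) = sO a (orbit G r) (act g d)"
proof (rule ext)
  fix i
  have l: "act g (sO a (orbit G r) d) i = (if inv g i \<in> orbit G r then d (inv g i) - Bf a d (simple_root (inv g i)) else d (inv g i))"
    by (simp add: act_def sO_def)
  have r: "sO a (orbit G r) (act g d) i = (if i \<in> orbit G r then act g d i - Bf a (act g d) (simple_root i) else act g d i)"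
    by (simp add: sO_def)
  show "act g (sO a (orbit G r) d) i = sO a (orbit G r) (act g d) i"
    unfolding l r act_Bf_simple[OF assms] orbit_inv_mem[OF assms] by (simp add: act_def)
qed

lemma sO_out: "k \<notin> Ob \<Longrightarrow> sO a Ob d k = d k"
  by (simp add: sO_def)

definition Orbs where "Orbs = orbit G ` UNIV"

lemma sum_orbs: "(\<Sum>i\<in>UNIV. f i) = (\<Sum>X\<in>Orbs. \<Sum>i\<in>X. f i)"
proof -
  have U: "\<Union>Orbs = UNIV" unfolding Orbs_def using orbit_self by blast
  have "(\<Sum>i\<in>\<Union>Orbs. f i) = (\<Sum>X\<in>Orbs. \<Sum>i\<in>X. f i)"
    by (subst sum.Union_disjoint) (auto simp: Orbs_def, (metis orbit_eq)+)
  then show ?thesis using U by simp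
qed

lemma proj_sO: assumes "X \<in> Orbs"
  shows "orbit_proj (sO a (orbit G r) d) X = orbit_proj d X - (if X = orbit G r then (\<Sum>k\<in>orbit G r. Bf a d (simple_root k)) else 0)"
proof (cases "X = orbit G r")
  case True then show ?thesis by (simp add: orbit_proj_def sO_def sum_subtractf)
next
  case False
  then have "X \<inter> orbit G r = {}" using assms orbit_disj unfolding Orbs_def by blast
  then have "orbit_proj (sO a (orbit G r) d) X = orbit_proj d X"
    unfolding orbit_proj_def by (intro sum.cong HOL.refl) (auto simp: sO_def)
  then show ?thesis using False by simp
qed

lemma bij_orbit: assumes "h \<in> G" shows "bij_betw h (orbit G r) (orbit G r)"
proof -
  have "inj_on h (orbit G r)" using bij_is_inj[OF G_bij[OF assms]] inj_on_subset by blast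
  moreover have "h ` orbit G r = orbit G r"
  proof
    show "h ` orbit G r \<subseteq> orbit G r"
    proof (rule image_subsetI)
      fix k assume k: "k \<in> orbit G r"
      have "h k \<in> orbit G k" by (rule orbit_mem[OF assms])
      with orbit_eq[OF k] show "h k \<in> orbit G r" by simp
    qed
    show "orbit G r \<subseteq> h ` orbit G r"
    proof
      fix k assume k: "k \<in> orbit G r"
      have "inv h k \<in> orbit G r" using k orbit_inv_mem[OF assms] by blast
      moreover have "k = h (inv h k)" using g_inv_g[OF assms] by metis
      ultimately show "k \<in> h ` orbit G r" by blast
    qed
  qed
  ultimately show ?thesis by (simp add: bij_betw_def)
qed

lemma wt_const: assumes "h \<in> G"
  shows "(\<Sum>k\<in>orbit G r. cartan a (h i) k) = (\<Sum>k\<in>orbit G r. cartan a i k)"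
proof -
  have "(\<Sum>k\<in>orbit G r. cartan a (h i) k) = (\<Sum>k\<in>orbit G r. cartan a (h i) (h k))"
    using sum.reindex_bij_betw[OF bij_orbit[OF assms], of "\<lambda>k. cartan a (h i) k"] by simp
  also have "\<dots> = (\<Sum>k\<in>orbit G r. cartan a i k)" by (simp add: cartan_aut assms)
  finally show ?thesis .
qed

lemma Bf_orbit_sum: "(\<Sum>k\<in>Ob. Bf a d (simple_root k)) = (\<Sum>i\<in>UNIV. (\<Sum>k\<in>Ob. cartan a i k) * d i)"
  unfolding Bf_simple_right by (subst sum.swap) (simp add: sum_distrib_right)

lemma pi_weighted:
  assumes pi: "\<forall>X \<in> orbit G ` UNIV. orbit_proj \<gamma> X = orbit_proj \<beta> X"
    and w: "\<And>h i. h \<in> G \<Longrightarrow> w (h i) = w i"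
  shows "(\<Sum>i\<in>UNIV. w i * \<gamma> i) = (\<Sum>i\<in>UNIV. w i * \<beta> i)"
proof -
  have c: "(\<Sum>i\<in>X. w i * d i) = w x * orbit_proj d X" if "X = orbit G x" for X x d
  proof -
    have "(\<Sum>i\<in>X. w i * d i) = (\<Sum>i\<in>X. w x * d i)"
      using that w unfolding orbit_def by (intro sum.cong HOL.refl) auto
    then show ?thesis by (simp add: orbit_proj_def sum_distrib_left)
  qed
  have "(\<Sum>X\<in>Orbs. \<Sum>i\<in>X. w i * \<gamma> i) = (\<Sum>X\<in>Orbs. \<Sum>i\<in>X. w i * \<beta> i)"
  proof (rule sum.cong[OF HOL.refl])
    fix X assume "X \<in> Orbs"
    then obtain x where x: "X = orbit G x" unfolding Orbs_def by auto
    show "(\<Sum>i\<in>X. w i * \<gamma> i) = (\<Sum>i\<in>X. w i * \<beta> i)"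
      using c[OF x] pi x by simp
  qed
  then show ?thesis by (simp add: sum_orbs)
qed

lemma pi_height:
  assumes pi: "\<forall>X \<in> orbit G ` UNIV. orbit_proj \<gamma> X = orbit_proj \<beta> X"
  shows "(\<Sum>i\<in>UNIV. \<gamma> i) = (\<Sum>i\<in>UNIV. \<beta> i)"
  using pi_weighted[OF pi, of "\<lambda>_. 1"] by simp

lemma pi_orbit_Bf:
  assumes pi: "\<forall>X \<in> orbit G ` UNIV. orbit_proj \<gamma> X = orbit_proj \<beta> X"
  shows "(\<Sum>k\<in>orbit G r. Bf a \<gamma> (simple_root k)) = (\<Sum>k\<in>orbit G r. Bf a \<beta> (simple_root k))"
  unfolding Bf_orbit_sum by (rule pi_weighted[OF pi]) (rule wt_const)

end



context dq begin

lemma S_const: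
  assumes "h \<in> G"
  shows "(\<Sum>g\<in>G. \<gamma> (inv g (h i))) = (\<Sum>g\<in>G. \<gamma> (inv g i))"
proof (rule sum.reindex_bij_witness[where i="\<lambda>b. h \<circ> b" and j="\<lambda>b. inv h \<circ> b"])
  fix b assume b: "b \<in> G"
  show "h \<circ> (inv h \<circ> b) = b" by (rule ext) (simp add: g_inv_g assms)
  show "inv h \<circ> b \<in> G" by (rule G_comp[OF G_inv[OF assms] b])
  show "inv h \<circ> (h \<circ> b) = b" by (rule ext) (simp add: inv_g_g assms)
  show "h \<circ> b \<in> G" by (rule G_comp[OF assms b])
  have "inv (inv h \<circ> b) = inv b \<circ> inv (inv h)"
    by (rule o_inv_distrib[OF G_bij[OF G_inv[OF assms]] G_bij[OF b]])
  also have "inv (inv h) = h" by (rule inv_inv_eq[OF G_bij[OF assms]])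
  finally have e: "inv (inv h \<circ> b) = inv b \<circ> h" .
  show "\<gamma> (inv (inv h \<circ> b) i) = \<gamma> (inv b (h i))" by (simp only: e o_apply)
qed

lemma good_orbit:
  assumes nn: "nonneg \<gamma>" and nz: "\<gamma> \<noteq> (\<lambda>_. 0)"
  shows "\<exists>r. (\<Sum>k\<in>orbit G r. Bf a \<gamma> (simple_root k)) > 0"
proof (rule ccontr)
  assume "\<not> ?thesis"
  then have neg: "(\<Sum>k\<in>orbit G r. Bf a \<gamma> (simple_root k)) \<le> 0" for r by (simp add: not_less)
  define S where "S i = (\<Sum>g\<in>G. act g \<gamma> i)" for i
  have Sc: "S (h i) = S i" if "h \<in> G" for h i
    unfolding S_def act_def using S_const[OF that] .
  have actS: "act g S = S" if "g \<in> G" for g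
    using Sc[OF G_inv[OF that]] by (auto simp: act_def)
  have Snn: "S i \<ge> 0" for i
    unfolding S_def act_def using nn by (auto simp: nonneg_def intro!: sum_nonneg)
  have Sge: "S i \<ge> \<gamma> i" for i
  proof -
    have "act id \<gamma> i \<le> S i" unfolding S_def
      by (rule member_le_sum[OF G_id]) (use nn in \<open>auto simp: nonneg_def act_def\<close>)
    then show ?thesis by (simp add: act_def)
  qed
  obtain i0 where "\<gamma> i0 \<noteq> 0" using nz by auto
  moreover have "\<gamma> i0 \<ge> 0" using nn by (simp add: nonneg_def)
  ultimately have "\<gamma> i0 > 0" by simp
  then have "S \<noteq> (\<lambda>_. 0)" using Sge[of i0] by auto
  then have pos: "Bf a S S > 0" by (rule PD)
  have "Bf a S S = (\<Sum>g\<in>G. Bf a (act g \<gamma>) S)"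
    unfolding S_def[abs_def] by (rule Bf_sum_left[OF G_finite])
  also have "\<dots> = (\<Sum>g\<in>G. Bf a \<gamma> S)"
  proof (rule sum.cong[OF HOL.refl])
    fix g assume g: "g \<in> G"
    have "Bf a (act g \<gamma>) S = Bf a (act g \<gamma>) (act g S)" using actS[OF g] by simp
    also have "\<dots> = Bf a \<gamma> S" by (rule act_Bf[OF g])
    finally show "Bf a (act g \<gamma>) S = Bf a \<gamma> S" .
  qed
  also have "\<dots> = of_nat (card G) * Bf a \<gamma> S" by simp
  finally have e1: "Bf a S S = of_nat (card G) * Bf a \<gamma> S" .
  have "Bf a \<gamma> S = (\<Sum>j\<in>UNIV. S j * Bf a \<gamma> (simple_root j))"
    unfolding Bf_simple_right by (rule Bf_right)
  also have "\<dots> = (\<Sum>X\<in>Orbs. \<Sum>j\<in>X. S j * Bf a \<gamma> (simple_root j))" by (rule sum_orbs)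
  also have "\<dots> \<le> 0"
  proof (rule sum_nonpos)
    fix X assume "X \<in> Orbs"
    then obtain x where x: "X = orbit G x" unfolding Orbs_def by auto
    have "(\<Sum>j\<in>X. S j * Bf a \<gamma> (simple_root j)) = (\<Sum>j\<in>X. S x * Bf a \<gamma> (simple_root j))"
      using x Sc unfolding orbit_def by (intro sum.cong HOL.refl) auto
    also have "\<dots> = S x * (\<Sum>j\<in>X. Bf a \<gamma> (simple_root j))" by (simp add: sum_distrib_left)
    also have "\<dots> \<le> 0" using neg[of x] Snn[of x] x by (simp add: mult_nonneg_nonpos)
    finally show "(\<Sum>j\<in>X. S j * Bf a \<gamma> (simple_root j)) \<le> 0" .
  qed
  finally have "Bf a \<gamma> S \<le> 0" .
  then have "Bf a S S \<le> 0" using e1 by (simp add: mult_nonneg_nonpos)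
  then show False using pos by simp
qed

lemma supp_simple:
  assumes root: "\<gamma> \<in> roots a" and nn: "nonneg \<gamma>" and supp: "\<forall>k. k \<notin> orbit G r \<longrightarrow> \<gamma> k = 0"
  shows "\<exists>j\<in>orbit G r. \<gamma> = simple_root j"
proof -
  have inner: "(\<Sum>j\<in>UNIV. cartan a i j * \<gamma> i * \<gamma> j) = 2 * (\<gamma> i * \<gamma> i)" for i
  proof -
    have "(\<Sum>j\<in>UNIV. cartan a i j * \<gamma> i * \<gamma> j) = (\<Sum>j\<in>UNIV. if j = i then 2 * (\<gamma> i * \<gamma> i) else 0)"
    proof (rule sum.cong[OF HOL.refl])
      fix j
      show "cartan a i j * \<gamma> i * \<gamma> j = (if j = i then 2 * (\<gamma> i * \<gamma> i) else 0)"
      proof (cases "j = i")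
        case True then show ?thesis by (simp add: cartan_ii)
      next
        case False
        show ?thesis
        proof (cases "i \<in> orbit G r \<and> j \<in> orbit G r")
          case True
          then have "cartan a i j = 0" using cartan_in_orbit False by metis
          then show ?thesis using False by simp
        next
          case False
          then have "\<gamma> i = 0 \<or> \<gamma> j = 0" using supp by blast
          then show ?thesis using \<open>j \<noteq> i\<close> by auto
        qed
      qed
    qed
    then show ?thesis by simp
  qed
  have "Bf a \<gamma> \<gamma> = 2 * (\<Sum>i\<in>UNIV. \<gamma> i * \<gamma> i)"
    unfolding Bf_def inner by (simp add: sum_distrib_left)
  then have sq: "(\<Sum>i\<in>UNIV. \<gamma> i * \<gamma> i) = 1" using root_norm[OF root] by simp
  obtain i where i0: "\<gamma> i \<noteq> 0" using root_nonzero[OF root] by auto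
  have gi: "\<gamma> i \<ge> 1" using i0 nn by (simp add: nonneg_def) (metis int_one_le_iff_zero_less order_le_less)
  have iO: "i \<in> orbit G r" using i0 supp by blast
  have split: "(\<Sum>k\<in>UNIV. \<gamma> k * \<gamma> k) = \<gamma> i * \<gamma> i + (\<Sum>k\<in>UNIV - {i}. \<gamma> k * \<gamma> k)"
    by (simp add: sum.remove)
  have rest_nn: "(\<Sum>k\<in>UNIV - {i}. \<gamma> k * \<gamma> k) \<ge> 0" by (simp add: sum_nonneg)
  have "\<gamma> i * \<gamma> i \<ge> \<gamma> i * 1" using gi by (intro mult_left_mono) auto
  then have "\<gamma> i * \<gamma> i = 1" and rest0: "(\<Sum>k\<in>UNIV - {i}. \<gamma> k * \<gamma> k) = 0"
    using sq split rest_nn gi by linarith+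
  then have g1: "\<gamma> i = 1" using gi \<open>\<gamma> i * \<gamma> i \<ge> \<gamma> i * 1\<close> by simp
  have "\<forall>k\<in>UNIV - {i}. \<gamma> k * \<gamma> k = 0"
    using rest0 by (subst (asm) sum_nonneg_eq_0_iff) auto
  then have "\<gamma> = simple_root i" using g1 by (auto simp: simple_root_def)
  then show ?thesis using iO by blast
qed

lemma supp_transfer:
  assumes pi: "\<forall>X \<in> orbit G ` UNIV. orbit_proj \<gamma> X = orbit_proj \<beta> X"
    and nn: "nonneg \<beta>" and supp: "\<forall>k. k \<notin> orbit G r \<longrightarrow> \<gamma> k = 0"
  shows "\<forall>k. k \<notin> orbit G r \<longrightarrow> \<beta> k = 0"
proof (intro allI impI)
  fix k assume k: "k \<notin> orbit G r"
  have "\<forall>i\<in>orbit G k. i \<notin> orbit G r"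
    using k by (metis orbit_eq orbit_self)
  then have "orbit_proj \<gamma> (orbit G k) = 0" using supp by (simp add: orbit_proj_def)
  then have "orbit_proj \<beta> (orbit G k) = 0" using pi by auto
  then have "\<forall>i\<in>orbit G k. \<beta> i = 0"
    unfolding orbit_proj_def using nn by (subst (asm) sum_nonneg_eq_0_iff) (auto simp: nonneg_def)
  then show "\<beta> k = 0" using orbit_self by blast
qed

lemma sO_height: "(\<Sum>i\<in>UNIV. sO a Ob d i) = (\<Sum>i\<in>UNIV. d i) - (\<Sum>k\<in>Ob. Bf a d (simple_root k))"
proof -
  have "(\<Sum>i\<in>UNIV. sO a Ob d i) = (\<Sum>i\<in>UNIV. d i - (if i \<in> Ob then Bf a d (simple_root i) else 0))"
    by (rule sum.cong) (auto simp: sO_def)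
  then show ?thesis by (simp add: sum_subtractf sum_if_mem)
qed

lemma main_pos:
  "\<forall>\<gamma> \<beta>. \<gamma> \<in> roots a \<longrightarrow> \<beta> \<in> roots a \<longrightarrow> nonneg \<gamma> \<longrightarrow> nonneg \<beta> \<longrightarrow>
     (\<forall>X \<in> orbit G ` UNIV. orbit_proj \<gamma> X = orbit_proj \<beta> X) \<longrightarrow> nat (\<Sum>i\<in>UNIV. \<gamma> i) = h \<longrightarrow>
     (\<exists>g\<in>G. \<gamma> = act g \<beta>)"
proof (induction h rule: less_induct)
  case (less h)
  show ?case
  proof (intro allI impI)
    fix \<gamma> \<beta> :: "'v \<Rightarrow> int"
    assume rg: "\<gamma> \<in> roots a" and rb: "\<beta> \<in> roots a" and ng: "nonneg \<gamma>" and nb: "nonneg \<beta>"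
      and pi: "\<forall>X \<in> orbit G ` UNIV. orbit_proj \<gamma> X = orbit_proj \<beta> X"
      and ht: "nat (\<Sum>i\<in>UNIV. \<gamma> i) = h"
    have pi': "\<forall>X \<in> orbit G ` UNIV. orbit_proj \<beta> X = orbit_proj \<gamma> X" using pi by simp
    show "\<exists>g\<in>G. \<gamma> = act g \<beta>"
    proof (cases "\<exists>r. \<forall>k. k \<notin> orbit G r \<longrightarrow> \<gamma> k = 0")
      case True
      then obtain r where sg: "\<forall>k. k \<notin> orbit G r \<longrightarrow> \<gamma> k = 0" by blast
      have sb: "\<forall>k. k \<notin> orbit G r \<longrightarrow> \<beta> k = 0" by (rule supp_transfer[OF pi nb sg])
      obtain j where j: "j \<in> orbit G r" "\<gamma> = simple_root j" using supp_simple[OF rg ng sg] by blast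
      obtain k where k: "k \<in> orbit G r" "\<beta> = simple_root k" using supp_simple[OF rb nb sb] by blast
      obtain g1 where g1: "g1 \<in> G" "j = g1 r" using j(1) unfolding orbit_def by auto
      obtain g2 where g2: "g2 \<in> G" "k = g2 r" using k(1) unfolding orbit_def by auto
      define g where "g = g1 \<circ> inv g2"
      have gG: "g \<in> G" unfolding g_def by (rule G_comp[OF g1(1) G_inv[OF g2(1)]])
      have "g k = j" unfolding g_def using g1 g2 inv_g_g by simp
      then have "act g \<beta> = \<gamma>" using act_simple[OF gG] j k by simp
      then show ?thesis using gG by metis
    next
      case False
      have nzg: "\<gamma> \<noteq> (\<lambda>_. 0)" by (rule root_nonzero[OF rg])
      obtain r where t: "(\<Sum>k\<in>orbit G r. Bf a \<gamma> (simple_root k)) > 0" using good_orbit[OF ng nzg] by blast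
      define O' where "O' = orbit G r"
      define t where "t = (\<Sum>k\<in>O'. Bf a \<gamma> (simple_root k))"
      have tpos: "t > 0" using t unfolding t_def O'_def .
      have tb: "(\<Sum>k\<in>O'. Bf a \<beta> (simple_root k)) = t"
        unfolding t_def O'_def using pi_orbit_Bf[OF pi] by simp
      define \<gamma>' where "\<gamma>' = sO a O' \<gamma>"
      define \<beta>' where "\<beta>' = sO a O' \<beta>"
      have rg': "\<gamma>' \<in> roots a" unfolding \<gamma>'_def O'_def by (rule sO_root[OF rg])
      have rb': "\<beta>' \<in> roots a" unfolding \<beta>'_def O'_def by (rule sO_root[OF rb])
      obtain k1 where k1: "k1 \<notin> O'" "\<gamma> k1 \<noteq> 0" using False unfolding O'_def by blast
      have "\<gamma> k1 \<ge> 0" using ng by (simp add: nonneg_def)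
      then have "\<gamma>' k1 > 0" using k1 unfolding \<gamma>'_def by (simp add: sO_out)
      then have ng': "nonneg \<gamma>'" using root_sign[OF rg'] unfolding nonneg_def
        by (auto dest: spec[of _ k1] spec[of _ k2])
      have "\<not> (\<forall>k. k \<notin> O' \<longrightarrow> \<beta> k = 0)"
        using supp_transfer[OF pi' ng] False unfolding O'_def by blast
      then obtain k2 where k2: "k2 \<notin> O'" "\<beta> k2 \<noteq> 0" by blast
      have "\<beta> k2 \<ge> 0" using nb by (simp add: nonneg_def)
      then have "\<beta>' k2 > 0" using k2 unfolding \<beta>'_def by (simp add: sO_out)
      then have nb': "nonneg \<beta>'" using root_sign[OF rb'] unfolding nonneg_def
        by (auto dest: spec[of _ k1] spec[of _ k2])
      have pi2: "\<forall>X \<in> orbit G ` UNIV. orbit_proj \<gamma>' X = orbit_proj \<beta>' X"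
      proof
        fix X assume X: "X \<in> orbit G ` UNIV"
        then have XO: "X \<in> Orbs" by (simp add: Orbs_def)
        show "orbit_proj \<gamma>' X = orbit_proj \<beta>' X"
          unfolding \<gamma>'_def \<beta>'_def O'_def proj_sO[OF XO]
          using pi[rule_format, OF X] tb t_def O'_def by simp
      qed
      have h1: "(\<Sum>i\<in>UNIV. \<gamma>' i) = (\<Sum>i\<in>UNIV. \<gamma> i) - t"
        unfolding \<gamma>'_def t_def by (rule sO_height)
      have h2: "(\<Sum>i\<in>UNIV. \<gamma>' i) \<ge> 0" using ng' by (simp add: nonneg_def sum_nonneg)
      have lt: "nat (\<Sum>i\<in>UNIV. \<gamma>' i) < h" using h1 h2 tpos ht by linarith
      obtain g where g: "g \<in> G" "\<gamma>' = act g \<beta>'"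
        using less.IH[OF lt] rg' rb' ng' nb' pi2 by blast
      have "\<gamma>' = sO a O' (act g \<beta>)" using g act_sO[OF g(1)] unfolding \<beta>'_def O'_def by simp
      then have "sO a O' \<gamma>' = act g \<beta>" unfolding O'_def by (simp add: sO_invol)
      then have "\<gamma> = act g \<beta>" unfolding \<gamma>'_def O'_def by (simp add: sO_invol)
      then show ?thesis using g(1) by blast
    qed
  qed
qed

end


theorem mainTheorem18:
  fixes a :: "'v::finite \<Rightarrow> 'v \<Rightarrow> nat" and G :: "('v \<Rightarrow> 'v) set"
    and \<gamma> \<beta> :: "'v \<Rightarrow> int"
  assumes "dynkin_quiver a"
    and "aut_group a G"
    and "\<gamma> \<in> roots a" and "\<beta> \<in> roots a"
    and "\<forall>X \<in> orbit G ` UNIV. orbit_proj \<gamma> X = orbit_proj \<beta> X"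
  shows "\<exists>g\<in>G. \<gamma> = act g \<beta>"
proof -
  interpret dq a G using assms(1,2) by unfold_locales
  note rg = assms(3) and rb = assms(4) and pi = assms(5)
  have hteq: "(\<Sum>i\<in>UNIV. \<gamma> i) = (\<Sum>i\<in>UNIV. \<beta> i)" by (rule pi_height[OF pi])
  have zero_of: "d = (\<lambda>_. 0)" if "nonneg d" "(\<Sum>i\<in>UNIV. d i) = 0" for d :: "'v \<Rightarrow> int"
    using that by (subst (asm) sum_nonneg_eq_0_iff) (auto simp: nonneg_def)
  have sum_neg: "(\<Sum>i\<in>UNIV. - d i) = - (\<Sum>i\<in>UNIV. d i)" for d :: "'v \<Rightarrow> int"
    by (simp add: sum_negf)
  have ht_nn: "(\<Sum>i\<in>UNIV. d i) \<ge> 0" if "nonneg d" for d :: "'v \<Rightarrow> int"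
    using that by (simp add: nonneg_def sum_nonneg)
  from root_sign[OF rg] show ?thesis
  proof
    assume ng: "nonneg \<gamma>"
    from root_sign[OF rb] show ?thesis
    proof
      assume nb: "nonneg \<beta>"
      then show ?thesis using main_pos rg rb ng pi by blast
    next
      assume nb: "nonneg (\<lambda>k. - \<beta> k)"
      have "(\<Sum>i\<in>UNIV. \<gamma> i) = 0" using ht_nn[OF ng] ht_nn[OF nb] hteq sum_neg[of \<beta>] by linarith
      then have "\<gamma> = (\<lambda>_. 0)" by (rule zero_of[OF ng])
      then show ?thesis using root_nonzero[OF rg] by simp
    qed
  next
    assume ng: "nonneg (\<lambda>k. - \<gamma> k)"
    from root_sign[OF rb] show ?thesis
    proof
      assume nb: "nonneg \<beta>"
      have "(\<Sum>i\<in>UNIV. \<beta> i) = 0" using ht_nn[OF ng] ht_nn[OF nb] hteq sum_neg[of \<gamma>] by linarith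
      then have "\<beta> = (\<lambda>_. 0)" by (rule zero_of[OF nb])
      then show ?thesis using root_nonzero[OF rb] by simp
    next
      assume nb: "nonneg (\<lambda>k. - \<beta> k)"
      have pin: "\<forall>X \<in> orbit G ` UNIV. orbit_proj (\<lambda>k. - \<gamma> k) X = orbit_proj (\<lambda>k. - \<beta> k) X"
        using pi by (simp add: orbit_proj_def sum_negf)
      obtain g where g: "g \<in> G" "(\<lambda>k. - \<gamma> k) = act g (\<lambda>k. - \<beta> k)"
        using main_pos root_neg[OF rg] root_neg[OF rb] ng nb pin by blast
      then have "(\<lambda>k. - \<gamma> k) = (\<lambda>k. - act g \<beta> k)" by (simp add: act_neg)
      then have "\<gamma> = act g \<beta>" by (metis (no_types) minus_equation_iff ext)
      then show ?thesis using g(1) by blast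
    qed
  qed
qed

end
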